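(* Let $n\ge 2$ and let $F_{2n}$ be the free group with free basis $x_1,\dots,x_n,y_1,\dots,y_n$. For $i=1,\dots,n-1$ define automorphisms $s_i,r_i\in{\rm Aut}(F_{2n})$ by $$s_i:\ x_i\mapsto x_{i+1}y_{i+1},\quad x_{i+1}\mapsto x_iy_{i+1}^{-1},\qquad r_i:\ x_i\mapsto x_{i+1},\ x_{i+1}\mapsto x_i,\ y_i\mapsto y_{i+1},\ y_{i+1}\mapsto y_i,$$ all generators not listed being fixed. Then the assignment $\theta(\sigma_i)=s_i$, $\theta(\rho_i)=r_i$ ($i=1,\dots,n-1$) extends to a homomorphism $\theta:FVB_n\to{\rm Aut}(F_{2n})$. Moreover, $\theta$ does not preserve the forbidden relations: for $n\ge3$ and each $i=1,\dots,n-2$ one has $\theta(\rho_i\sigma_{i+1}\sigma_i)\neq\theta(\sigma_{i+1}\sigma_i\rho_{i+1})$.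
   Context: The flat virtual braid group $FVB_n$ is the group with generators $\sigma_1,\dots,\sigma_{n-1},\rho_1,\dots,\rho_{n-1}$ and defining relations: $\sigma_i\sigma_j=\sigma_j\sigma_i$ for $|i-j|\ge2$; $\sigma_i\sigma_{i+1}\sigma_i=\sigma_{i+1}\sigma_i\sigma_{i+1}$; $\rho_i^2=1$; $\rho_i\rho_j=\rho_j\rho_i$ for $|i-j|\ge2$; $\rho_i\rho_{i+1}\rho_i=\rho_{i+1}\rho_i\rho_{i+1}$; $\sigma_i\rho_j=\rho_j\sigma_i$ for $|i-j|\ge2$; $\rho_i\rho_{i+1}\sigma_i=\sigma_{i+1}\rho_i\rho_{i+1}$; and $\sigma_i^2=1$ (indices in the obvious ranges). The relations $\rho_i\sigma_{i+1}\sigma_i=\sigma_{i+1}\sigma_i\rho_{i+1}$ ($i=1,\dots,n-2$) are called the forbidden relations. Automorphisms act on the right: for bijections $f,g$ the product $fg$ is the map $x\mapsto g(f(x))$; a homomorphism $FVB_n\to{\rm Aut}(F_{2n})$ is understood with respect to this multiplication. *)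

theory Defs
  imports "HOL-Algebra.Algebra"
begin

text \<open>A letter (b, a) stands for a if b = False and for a inverse if b = True.\<close>

type_synonym 'a word = "(bool \<times> 'a) list"

fun red_cons :: "bool \<times> 'a \<Rightarrow> 'a word \<Rightarrow> 'a word" where
  "red_cons l [] = [l]"
| "red_cons l (m # ws) = (if fst m = (\<not> fst l) \<and> snd m = snd l then ws else l # m # ws)"

definition reduce :: "'a word \<Rightarrow> 'a word" where
  "reduce w = foldr red_cons w []"

fun reduced :: "'a word \<Rightarrow> bool" where
  "reduced [] = True"
| "reduced [l] = True"
| "reduced (l # m # ws) = (\<not> (fst m = (\<not> fst l) \<and> snd m = snd l) \<and> reduced (m # ws))"

definition inv_word :: "'a word \<Rightarrow> 'a word" where
  "inv_word w = rev (map (\<lambda>(b, a). (\<not> b, a)) w)"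

definition free_grp :: "'a set \<Rightarrow> 'a word monoid" where
  "free_grp A = \<lparr> carrier = {w. reduced w \<and> snd ` set w \<subseteq> A},
                 monoid.mult = (\<lambda>v w. reduce (v @ w)),
                 one = [] \<rparr>"

definition gen :: "'a \<Rightarrow> 'a word" where
  "gen a = [(False, a)]"

definition free_ext :: "('a \<Rightarrow> 'a word) \<Rightarrow> 'a word \<Rightarrow> 'a word" where
  "free_ext f w = reduce (concat (map (\<lambda>(b, a). if b then inv_word (f a) else f a) w))"

definition normal_closure :: "('a, 'b) monoid_scheme \<Rightarrow> 'a set \<Rightarrow> 'a set" where
  "normal_closure G R =
     generate G {g \<otimes>\<^bsub>G\<^esub> r \<otimes>\<^bsub>G\<^esub> inv\<^bsub>G\<^esub> g | g r. g \<in> carrier G \<and> r \<in> R}"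

text \<open>Group with generators A and relations given by pairs of words (lhs, rhs).\<close>
definition presented_grp :: "'a set \<Rightarrow> ('a word \<times> 'a word) set \<Rightarrow> 'a word set monoid" where
  "presented_grp A Rels =
     free_grp A Mod normal_closure (free_grp A) {reduce (u @ inv_word v) | u v. (u, v) \<in> Rels}"

definition pclass :: "'a set \<Rightarrow> ('a word \<times> 'a word) set \<Rightarrow> 'a word \<Rightarrow> 'a word set" where
  "pclass A Rels w =
     r_coset (free_grp A) (normal_closure (free_grp A) {reduce (u @ inv_word v) | u v. (u, v) \<in> Rels})
       (reduce w)"

section \<open>Automorphism group with right action: (f g)(x) = g (f x)\<close>

definition AutR :: "('a, 'b) monoid_scheme \<Rightarrow> ('a \<Rightarrow> 'a) monoid" where
  "AutR G = \<lparr> carrier = auto G,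
             monoid.mult = (\<lambda>f g. compose (carrier G) g f),
             one = (\<lambda>x \<in> carrier G. x) \<rparr>"

datatype bgen = Sig nat | Rho nat

definition fvb_gens :: "nat \<Rightarrow> bgen set" where
  "fvb_gens n = {Sig i | i. 1 \<le> i \<and> i \<le> n - 1} \<union> {Rho i | i. 1 \<le> i \<and> i \<le> n - 1}"

abbreviation sg :: "nat \<Rightarrow> bgen word" where "sg i \<equiv> [(False, Sig i)]"
abbreviation rh :: "nat \<Rightarrow> bgen word" where "rh i \<equiv> [(False, Rho i)]"

definition fvb_rels :: "nat \<Rightarrow> (bgen word \<times> bgen word) set" where
  "fvb_rels n =
      {(sg i @ sg j, sg j @ sg i) | i j. 1 \<le> i \<and> i \<le> n - 1 \<and> 1 \<le> j \<and> j \<le> n - 1 \<and> (i + 2 \<le> j \<or> j + 2 \<le> i)}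
    \<union> {(sg i @ sg (i+1) @ sg i, sg (i+1) @ sg i @ sg (i+1)) | i. 1 \<le> i \<and> i + 1 \<le> n - 1}
    \<union> {(rh i @ rh i, []) | i. 1 \<le> i \<and> i \<le> n - 1}
    \<union> {(rh i @ rh j, rh j @ rh i) | i j. 1 \<le> i \<and> i \<le> n - 1 \<and> 1 \<le> j \<and> j \<le> n - 1 \<and> (i + 2 \<le> j \<or> j + 2 \<le> i)}
    \<union> {(rh i @ rh (i+1) @ rh i, rh (i+1) @ rh i @ rh (i+1)) | i. 1 \<le> i \<and> i + 1 \<le> n - 1}
    \<union> {(sg i @ rh j, rh j @ sg i) | i j. 1 \<le> i \<and> i \<le> n - 1 \<and> 1 \<le> j \<and> j \<le> n - 1 \<and> (i + 2 \<le> j \<or> j + 2 \<le> i)}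
    \<union> {(rh i @ rh (i+1) @ sg i, sg (i+1) @ rh i @ rh (i+1)) | i. 1 \<le> i \<and> i + 1 \<le> n - 1}
    \<union> {(sg i @ sg i, []) | i. 1 \<le> i \<and> i \<le> n - 1}"

definition FVB :: "nat \<Rightarrow> bgen word set monoid" where
  "FVB n = presented_grp (fvb_gens n) (fvb_rels n)"

definition fvb_elt :: "nat \<Rightarrow> bgen word \<Rightarrow> bgen word set" where
  "fvb_elt n w = pclass (fvb_gens n) (fvb_rels n) w"

datatype fgen = Xg nat | Yg nat

definition F2n_gens :: "nat \<Rightarrow> fgen set" where
  "F2n_gens n = {Xg j | j. 1 \<le> j \<and> j \<le> n} \<union> {Yg j | j. 1 \<le> j \<and> j \<le> n}"

definition F2n :: "nat \<Rightarrow> fgen word monoid" where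
  "F2n n = free_grp (F2n_gens n)"

definition s_img :: "nat \<Rightarrow> fgen \<Rightarrow> fgen word" where
  "s_img i a = (if a = Xg i then [(False, Xg (i+1)), (False, Yg (i+1))]
                else if a = Xg (i+1) then [(False, Xg i), (True, Yg (i+1))]
                else gen a)"

definition r_img :: "nat \<Rightarrow> fgen \<Rightarrow> fgen word" where
  "r_img i a = (if a = Xg i then gen (Xg (i+1))
                else if a = Xg (i+1) then gen (Xg i)
                else if a = Yg i then gen (Yg (i+1))
                else if a = Yg (i+1) then gen (Yg i)
                else gen a)"

definition s_aut :: "nat \<Rightarrow> nat \<Rightarrow> fgen word \<Rightarrow> fgen word" where
  "s_aut n i = (\<lambda>w \<in> carrier (F2n n). free_ext (s_img i) w)"

definition r_aut :: "nat \<Rightarrow> nat \<Rightarrow> fgen word \<Rightarrow> fgen word" where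
  "r_aut n i = (\<lambda>w \<in> carrier (F2n n). free_ext (r_img i) w)"

end

theory Submission
  imports Defs
begin


abbreviation F :: "'a word \<Rightarrow> 'a word \<Rightarrow> 'a word" where
  "F u r \<equiv> foldr red_cons u r"

definition ninv :: "bool \<times> 'a \<Rightarrow> bool \<times> 'a" where "ninv l = (\<not> fst l, snd l)"

lemma red_cons_eq: "red_cons l ws = (case ws of [] \<Rightarrow> [l] | m # ws' \<Rightarrow> if m = ninv l then ws' else l # ws)"
  by (cases ws) (auto simp: ninv_def prod_eq_iff)

lemma reduced_cons: "reduced (l # ws) \<longleftrightarrow> reduced ws \<and> (ws = [] \<or> hd ws \<noteq> ninv l)"
  by (cases ws) (auto simp: ninv_def prod_eq_iff)

lemma reduced_red_cons: "reduced ws \<Longrightarrow> reduced (red_cons l ws)"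
  by (cases ws) (auto simp: reduced_cons red_cons_eq)

lemma reduced_F: "reduced r \<Longrightarrow> reduced (F u r)"
  by (induction u) (auto intro: reduced_red_cons)

lemma reduced_reduce: "reduced (reduce w)"
  unfolding reduce_def by (rule reduced_F) simp

lemma ninv_ninv[simp]: "ninv (ninv l) = l" by (simp add: ninv_def)

lemma red_cons_cancel: "reduced v \<Longrightarrow> red_cons l (red_cons (ninv l) v) = v"
  by (cases v) (auto simp: red_cons_eq reduced_cons split: list.splits)

lemma F_append: "F (u @ v) r = F u (F v r)" by simp

lemma reduce_append: "reduce (u @ v) = F u (reduce v)"
  by (simp add: reduce_def)

lemma reduce_Cons: "reduce (l # v) = red_cons l (reduce v)"
  by (simp add: reduce_def)

lemma F_reduce: "reduced r \<Longrightarrow> F (reduce y) r = F y r"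
proof (induction y)
  case Nil then show ?case by (simp add: reduce_def)
next
  case (Cons l y)
  show ?case
  proof (cases "\<exists>t. reduce y = ninv l # t")
    case True
    then obtain t where t: "reduce y = ninv l # t" by blast
    have "reduce (l # y) = t" using t by (simp add: reduce_Cons red_cons_eq)
    moreover have "F (l # y) r = red_cons l (F (reduce y) r)" using Cons by simp
    moreover have "F (reduce y) r = red_cons (ninv l) (F t r)" using t by simp
    ultimately show ?thesis using red_cons_cancel[OF reduced_F[OF Cons.prems], of l t] by simp
  next
    case False
    then have "reduce (l # y) = l # reduce y"
      by (simp add: reduce_Cons red_cons_eq split: list.splits)
    then have "F (reduce (l # y)) r = red_cons l (F (reduce y) r)" by simp
    then show ?thesis using Cons by simp
  qed
qed

lemma reduce_reduced: "reduced w \<Longrightarrow> reduce w = w"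
proof (induction w)
  case Nil then show ?case by (simp add: reduce_def)
next
  case (Cons l w)
  then show ?case by (auto simp: reduce_Cons red_cons_eq reduced_cons split: list.splits)
qed

lemma reduce_reduce[simp]: "reduce (reduce w) = reduce w"
  by (simp add: reduce_reduced reduced_reduce)

lemma reduce_absorb: "reduce (x @ reduce y @ z) = reduce (x @ y @ z)"
  by (simp add: reduce_append F_reduce reduced_reduce)

lemma reduce_absorb1: "reduce (reduce y @ z) = reduce (y @ z)"
  using reduce_absorb[of "[]"] by simp

lemma reduce_absorb2: "reduce (x @ reduce y) = reduce (x @ y)"
  using reduce_absorb[of _ _ "[]"] by simp

lemma inv_word_Cons: "inv_word (l # w) = inv_word w @ [ninv l]"
  by (simp add: inv_word_def ninv_def case_prod_beta)

lemma inv_word_Nil[simp]: "inv_word [] = []" by (simp add: inv_word_def)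

lemma inv_word_append: "inv_word (u @ v) = inv_word v @ inv_word u"
  by (simp add: inv_word_def)

lemma inv_word_inv_word[simp]: "inv_word (inv_word w) = w"
  by (induction w) (simp_all add: inv_word_Cons inv_word_append ninv_def)

lemma F_cancel: "reduced r \<Longrightarrow> F (w @ inv_word w) r = r"
proof (induction w arbitrary: r)
  case Nil then show ?case by simp
next
  case (Cons l w)
  have "F ((l # w) @ inv_word (l # w)) r = red_cons l (F (w @ inv_word w) (red_cons (ninv l) r))"
    by (simp add: inv_word_Cons)
  also have "\<dots> = red_cons l (red_cons (ninv l) r)"
    using Cons reduced_red_cons by metis
  also have "\<dots> = r" using red_cons_cancel[OF Cons.prems] by simp
  finally show ?case .
qed

lemma reduce_cancel: "reduce (x @ w @ inv_word w @ y) = reduce (x @ y)"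
  by (simp add: reduce_append F_cancel[simplified] reduced_reduce)
  
lemma reduce_cancel': "reduce (x @ inv_word w @ w @ y) = reduce (x @ y)"
  using reduce_cancel[of x "inv_word w" y] by simp

lemma set_red_cons: "set (red_cons l ws) \<subseteq> insert l (set ws)"
  by (cases ws) auto

lemma set_F: "set (F u r) \<subseteq> set u \<union> set r"
  by (induction u) (use set_red_cons in fastforce)+

lemma set_reduce: "set (reduce w) \<subseteq> set w"
  using set_F[of w "[]"] by (simp add: reduce_def)




lemma free_grp_carrier: "carrier (free_grp A) = {w. reduced w \<and> snd ` set w \<subseteq> A}"
  by (simp add: free_grp_def)
lemma free_grp_mult: "x \<otimes>\<^bsub>free_grp A\<^esub> y = reduce (x @ y)"
  by (simp add: free_grp_def)
lemma free_grp_one: "\<one>\<^bsub>free_grp A\<^esub> = []"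
  by (simp add: free_grp_def)

lemma reduce_in_carrier: "snd ` set w \<subseteq> A \<Longrightarrow> reduce w \<in> carrier (free_grp A)"
  using set_reduce[of w] reduced_reduce[of w] by (auto simp: free_grp_carrier)

lemma set_inv_word: "snd ` set (inv_word w) = snd ` set w"
  by (induction w) (auto simp: inv_word_Cons ninv_def)

lemma group_free_grp: "group (free_grp A)"
proof (rule groupI)
  fix x y assume "x \<in> carrier (free_grp A)" "y \<in> carrier (free_grp A)"
  then show "x \<otimes>\<^bsub>free_grp A\<^esub> y \<in> carrier (free_grp A)"
    unfolding free_grp_mult by (intro reduce_in_carrier) (force simp: free_grp_carrier)
next
  show "\<one>\<^bsub>free_grp A\<^esub> \<in> carrier (free_grp A)" by (simp add: free_grp_one free_grp_carrier)
next
  fix x y z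
  show "x \<otimes>\<^bsub>free_grp A\<^esub> y \<otimes>\<^bsub>free_grp A\<^esub> z = x \<otimes>\<^bsub>free_grp A\<^esub> (y \<otimes>\<^bsub>free_grp A\<^esub> z)"
    using reduce_absorb1[of "x @ y" z] reduce_absorb2[of x "y @ z"] by (simp add: free_grp_mult)
next
  fix x assume "x \<in> carrier (free_grp A)"
  then show "\<one>\<^bsub>free_grp A\<^esub> \<otimes>\<^bsub>free_grp A\<^esub> x = x"
    by (simp add: free_grp_mult free_grp_one free_grp_carrier reduce_reduced)
next
  fix x assume x: "x \<in> carrier (free_grp A)"
  show "\<exists>y\<in>carrier (free_grp A). y \<otimes>\<^bsub>free_grp A\<^esub> x = \<one>\<^bsub>free_grp A\<^esub>"
  proof
    show "reduce (inv_word x) \<in> carrier (free_grp A)"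
      using x by (intro reduce_in_carrier) (auto simp: set_inv_word free_grp_carrier)
    show "reduce (inv_word x) \<otimes>\<^bsub>free_grp A\<^esub> x = \<one>\<^bsub>free_grp A\<^esub>"
      using reduce_cancel'[of "[]" x "[]"]
      by (simp add: free_grp_mult free_grp_one reduce_absorb1) (simp add: reduce_def)
  qed
qed

subsection \<open>Lifting into a group\<close>

definition lt :: "('b, 'c) monoid_scheme \<Rightarrow> ('a \<Rightarrow> 'b) \<Rightarrow> bool \<times> 'a \<Rightarrow> 'b" where
  "lt H f l = (if fst l then inv\<^bsub>H\<^esub> f (snd l) else f (snd l))"

definition flift :: "('b, 'c) monoid_scheme \<Rightarrow> ('a \<Rightarrow> 'b) \<Rightarrow> 'a word \<Rightarrow> 'b" where
  "flift H f w = foldr (\<lambda>l acc. lt H f l \<otimes>\<^bsub>H\<^esub> acc) w \<one>\<^bsub>H\<^esub>"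

context group begin

lemma lt_carrier: "\<forall>a. f a \<in> carrier G \<Longrightarrow> lt G f l \<in> carrier G"
  by (simp add: lt_def)

lemma flift_Nil[simp]: "flift G f [] = \<one>" by (simp add: flift_def)
lemma flift_Cons: "flift G f (l # w) = lt G f l \<otimes> flift G f w" by (simp add: flift_def)

lemma flift_carrier: "\<forall>a. f a \<in> carrier G \<Longrightarrow> flift G f w \<in> carrier G"
  by (induction w) (auto simp: flift_Cons lt_carrier)

lemma flift_append: "\<forall>a. f a \<in> carrier G \<Longrightarrow> flift G f (u @ v) = flift G f u \<otimes> flift G f v"
  by (induction u) (auto simp: flift_Cons lt_carrier flift_carrier m_assoc)

lemma lt_ninv: "\<forall>a. f a \<in> carrier G \<Longrightarrow> lt G f l \<otimes> lt G f (ninv l) = \<one>"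
  by (auto simp: lt_def ninv_def)

lemma flift_red_cons: assumes "\<forall>a. f a \<in> carrier G"
  shows "flift G f (red_cons l r) = flift G f (l # r)"
proof (cases r)
  case Nil then show ?thesis by simp
next
  case (Cons m ws)
  show ?thesis
  proof (cases "m = ninv l")
    case True
    have "flift G f (l # r) = (lt G f l \<otimes> lt G f (ninv l)) \<otimes> flift G f ws"
      using Cons True assms by (simp add: flift_Cons m_assoc lt_carrier flift_carrier)
    then show ?thesis using Cons True assms by (simp add: red_cons_eq lt_ninv flift_carrier)
  next
    case False then show ?thesis using Cons by (simp add: red_cons_eq)
  qed
qed

lemma flift_F: "\<forall>a. f a \<in> carrier G \<Longrightarrow> flift G f (F u r) = flift G f (u @ r)"
  by (induction u) (auto simp: flift_red_cons flift_Cons)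

lemma flift_reduce: "\<forall>a. f a \<in> carrier G \<Longrightarrow> flift G f (reduce w) = flift G f w"
  using flift_F[of f w "[]"] by (simp add: reduce_def)

lemma flift_hom: "\<forall>a. f a \<in> carrier G \<Longrightarrow> flift G f \<in> hom (free_grp A) G"
  by (auto simp: hom_def free_grp_mult flift_reduce flift_append flift_carrier)

lemma flift_inv_word: "\<forall>a. f a \<in> carrier G \<Longrightarrow> flift G f (inv_word w) = inv (flift G f w)"
proof (induction w)
  case Nil then show ?case by simp
next
  case (Cons l w)
  have "lt G f (ninv l) = inv (lt G f l)"
    using Cons.prems lt_ninv[OF Cons.prems, of l] lt_carrier[OF Cons.prems]
    by (metis inv_equality l_inv_ex r_inv lt_carrier inv_closed l_inv)
  then show ?case using Cons
    by (simp add: inv_word_Cons flift_append flift_Cons inv_mult_group lt_carrier flift_carrier)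
qed

end

definition fs :: "('a \<Rightarrow> 'a word) \<Rightarrow> bool \<times> 'a \<Rightarrow> 'a word" where
  "fs f l = (if fst l then inv_word (f (snd l)) else f (snd l))"

lemma free_ext_fs: "free_ext f w = reduce (concat (map (fs f) w))"
proof -
  have "(\<lambda>(b, a). if b then inv_word (f a) else f a) = fs f" by (auto simp: fs_def fun_eq_iff)
  then show ?thesis by (simp add: free_ext_def)
qed

lemma fs_ninv: "fs f (ninv l) = inv_word (fs f l)"
  by (simp add: fs_def ninv_def)

lemma cmf_red_cons: "reduce (concat (map (fs f) (red_cons l r))) = reduce (concat (map (fs f) (l # r)))"
proof (cases r)
  case Nil then show ?thesis by simp
next
  case (Cons m ws)
  then show ?thesis using reduce_cancel[of "[]" "fs f l" "concat (map (fs f) ws)"]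
    by (auto simp: red_cons_eq fs_ninv)
qed

lemma cmf_F: "reduce (concat (map (fs f) (F u r))) = reduce (concat (map (fs f) (u @ r)))"
proof (induction u)
  case Nil then show ?case by simp
next
  case (Cons l u)
  have "reduce (concat (map (fs f) (F (l # u) r))) = reduce (fs f l @ concat (map (fs f) (F u r)))"
    by (simp add: cmf_red_cons)
  also have "\<dots> = reduce (fs f l @ reduce (concat (map (fs f) (F u r))))" by (simp add: reduce_absorb2)
  also have "\<dots> = reduce (fs f l @ concat (map (fs f) (u @ r)))" by (simp add: Cons reduce_absorb2)
  finally show ?case by simp
qed

lemma free_ext_reduce: "free_ext f (reduce w) = free_ext f w"
  using cmf_F[of f w "[]"] by (simp add: free_ext_fs reduce_def)

lemma free_ext_append: "free_ext f (u @ v) = reduce (free_ext f u @ free_ext f v)"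
  by (simp add: free_ext_fs reduce_absorb1 reduce_absorb2)

lemma free_ext_carrier:
  assumes "\<forall>a\<in>A. f a \<in> carrier (free_grp A)" "snd ` set w \<subseteq> A"
  shows "free_ext f w \<in> carrier (free_grp A)"
  unfolding free_ext_fs
proof (rule reduce_in_carrier)
  have "\<And>l. l \<in> set w \<Longrightarrow> snd ` set (fs f l) \<subseteq> A"
    using assms by (auto simp: fs_def set_inv_word free_grp_carrier)
  then show "snd ` set (concat (map (fs f) w)) \<subseteq> A" by auto
qed

lemma free_ext_hom:
  assumes "\<forall>a\<in>A. f a \<in> carrier (free_grp A)"
  shows "(\<lambda>w \<in> carrier (free_grp A). free_ext f w) \<in> hom (free_grp A) (free_grp A)"
proof -
  have "free_ext f (reduce (x @ y)) = reduce (free_ext f x @ free_ext f y)" for x y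
    by (simp add: free_ext_reduce free_ext_append)
  moreover have "reduce (x @ y) \<in> carrier (free_grp A)" if "x \<in> carrier (free_grp A)" "y \<in> carrier (free_grp A)" for x y
    using that by (intro reduce_in_carrier) (force simp: free_grp_carrier)
  moreover have "free_ext f x \<in> carrier (free_grp A)" if "x \<in> carrier (free_grp A)" for x
    using that assms by (intro free_ext_carrier) (auto simp: free_grp_carrier)
  ultimately show ?thesis by (auto simp: hom_def free_grp_mult)
qed

lemma inv_gen: "inv\<^bsub>free_grp A\<^esub> (gen a) = [(True, a)]" if "a \<in> A"
proof -
  have "[(True, a)] \<otimes>\<^bsub>free_grp A\<^esub> gen a = \<one>\<^bsub>free_grp A\<^esub>"
    by (simp add: free_grp_mult free_grp_one gen_def reduce_def)
  then show ?thesis using that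
    by (intro group.inv_equality[OF group_free_grp]) (auto simp: free_grp_carrier gen_def)
qed

lemma hom_unique:
  assumes H: "group H" and h1: "h1 \<in> hom (free_grp A) H" and h2: "h2 \<in> hom (free_grp A) H"
    and eq: "\<forall>a\<in>A. h1 (gen a) = h2 (gen a)"
  shows "w \<in> carrier (free_grp A) \<Longrightarrow> h1 w = h2 w"
proof (induction w)
  case Nil
  have gh1: "group_hom (free_grp A) H h1"
    by (intro group_hom.intro group_hom_axioms.intro group_free_grp H h1)
  have gh2: "group_hom (free_grp A) H h2"
    by (intro group_hom.intro group_hom_axioms.intro group_free_grp H h2)
  show ?case using group_hom.hom_one[OF gh1] group_hom.hom_one[OF gh2] by (simp add: free_grp_one)
next
  case (Cons l w)
  have w: "w \<in> carrier (free_grp A)" using Cons.prems by (auto simp: free_grp_carrier reduced_cons)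
  have a: "snd l \<in> A" using Cons.prems by (auto simp: free_grp_carrier)
  have ga: "gen (snd l) \<in> carrier (free_grp A)" using a by (simp add: free_grp_carrier gen_def)
  have split: "l # w = [l] \<otimes>\<^bsub>free_grp A\<^esub> w"
    using Cons.prems by (simp add: free_grp_mult free_grp_carrier reduce_reduced)
  have gh1: "group_hom (free_grp A) H h1"
    by (intro group_hom.intro group_hom_axioms.intro group_free_grp H h1)
  have gh2: "group_hom (free_grp A) H h2"
    by (intro group_hom.intro group_hom_axioms.intro group_free_grp H h2)
  have l: "h1 [l] = h2 [l]"
  proof (cases "fst l")
    case True
    then have "[l] = inv\<^bsub>free_grp A\<^esub> (gen (snd l))" using inv_gen[OF a] by (cases l) auto
    then show ?thesis using eq a ga group_hom.hom_inv[OF gh1] group_hom.hom_inv[OF gh2] by metis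
  next
    case False
    then have "[l] = gen (snd l)" by (cases l) (auto simp: gen_def)
    then show ?thesis using eq a by simp
  qed
  have lc: "[l] \<in> carrier (free_grp A)" using a by (simp add: free_grp_carrier)
  show ?case using split l Cons.IH[OF w] w lc h1 h2 by (simp add: hom_mult)
qed




lemma AutR_carrier: "carrier (AutR G) = auto G" by (simp add: AutR_def)
lemma AutR_mult: "f \<otimes>\<^bsub>AutR G\<^esub> g = compose (carrier G) g f" by (simp add: AutR_def)
lemma AutR_one: "\<one>\<^bsub>AutR G\<^esub> = (\<lambda>x \<in> carrier G. x)" by (simp add: AutR_def)

lemma AutoGroup_simps:
  "carrier (AutoGroup G) = auto G"
  "\<one>\<^bsub>AutoGroup G\<^esub> = (\<lambda>x \<in> carrier G. x)"
  "f \<in> auto G \<Longrightarrow> g \<in> auto G \<Longrightarrow> g \<otimes>\<^bsub>AutoGroup G\<^esub> f = compose (carrier G) g f"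
  by (auto simp: AutoGroup_def BijGroup_def auto_def)

lemma group_AutR: assumes G: "group G" shows "group (AutR G)"
proof -
  interpret K: group "AutoGroup G" using group.AutoGroup[OF G] .
  show ?thesis
  proof (rule groupI)
    fix x y assume "x \<in> carrier (AutR G)" "y \<in> carrier (AutR G)"
    then show "x \<otimes>\<^bsub>AutR G\<^esub> y \<in> carrier (AutR G)"
      using K.m_closed[of y x] by (simp add: AutR_carrier AutR_mult AutoGroup_simps)
  next
    show "\<one>\<^bsub>AutR G\<^esub> \<in> carrier (AutR G)" using K.one_closed by (simp add: AutR_carrier AutR_one AutoGroup_simps)
  next
    fix x y z assume "x \<in> carrier (AutR G)" "y \<in> carrier (AutR G)" "z \<in> carrier (AutR G)"
    then show "x \<otimes>\<^bsub>AutR G\<^esub> y \<otimes>\<^bsub>AutR G\<^esub> z = x \<otimes>\<^bsub>AutR G\<^esub> (y \<otimes>\<^bsub>AutR G\<^esub> z)"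
      using K.m_assoc[of z y x] K.m_closed[of y x] K.m_closed[of z y]
      by (simp add: AutR_carrier AutR_mult AutoGroup_simps)
  next
    fix x assume "x \<in> carrier (AutR G)"
    then show "\<one>\<^bsub>AutR G\<^esub> \<otimes>\<^bsub>AutR G\<^esub> x = x"
      using K.r_one[of x] K.one_closed by (simp add: AutR_carrier AutR_mult AutR_one AutoGroup_simps)
  next
    fix x assume x: "x \<in> carrier (AutR G)"
    show "\<exists>y\<in>carrier (AutR G). y \<otimes>\<^bsub>AutR G\<^esub> x = \<one>\<^bsub>AutR G\<^esub>"
    proof
      show "inv\<^bsub>AutoGroup G\<^esub> x \<in> carrier (AutR G)" using x K.inv_closed by (simp add: AutR_carrier AutoGroup_simps)
      have ix: "inv\<^bsub>AutoGroup G\<^esub> x \<in> auto G" using x K.inv_closed by (simp add: AutR_carrier AutoGroup_simps)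
      show "inv\<^bsub>AutoGroup G\<^esub> x \<otimes>\<^bsub>AutR G\<^esub> x = \<one>\<^bsub>AutR G\<^esub>"
        using x K.r_inv[of x] AutoGroup_simps(3)[OF ix, of x] by (simp add: AutR_carrier AutR_mult AutR_one AutoGroup_simps)
    qed
  qed
qed

subsection \<open>Factoring through a presentation\<close>

definition relN :: "'a set \<Rightarrow> ('a word \<times> 'a word) set \<Rightarrow> 'a word set" where
  "relN A Rels = normal_closure (free_grp A) {reduce (u @ inv_word v) | u v. (u, v) \<in> Rels}"

lemma presented_grp_eq: "presented_grp A Rels = free_grp A Mod relN A Rels"
  by (simp add: presented_grp_def relN_def)

lemma pclass_eq: "pclass A Rels w = relN A Rels #>\<^bsub>free_grp A\<^esub> reduce w"
  by (simp add: pclass_def relN_def)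

lemma self_coset: assumes a: "a \<in> carrier (free_grp A)" and "[] \<in> M"
  shows "a \<in> M #>\<^bsub>free_grp A\<^esub> a"
proof -
  have "[] \<otimes>\<^bsub>free_grp A\<^esub> a = a" using a by (simp add: free_grp_mult free_grp_carrier reduce_reduced)
  then show ?thesis using assms(2) unfolding r_coset_def by force
qed

definition theta :: "('b, 'c) monoid_scheme \<Rightarrow> ('a \<Rightarrow> 'b) \<Rightarrow> 'a word set \<Rightarrow> 'b" where
  "theta H f XX = the_elem (flift H f ` XX)"

locale fact_setup =
  fixes H :: "('b, 'c) monoid_scheme" and f :: "'a \<Rightarrow> 'b" and A :: "'a set"
    and Rels :: "('a word \<times> 'a word) set"
  assumes H: "group H" and fc: "\<forall>a. f a \<in> carrier H"
    and rels: "\<And>u v. (u, v) \<in> Rels \<Longrightarrow> flift H f u = flift H f v"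
    and relsA: "\<And>u v. (u, v) \<in> Rels \<Longrightarrow> snd ` set u \<subseteq> A \<and> snd ` set v \<subseteq> A"
begin

abbreviation "FG \<equiv> free_grp A"
abbreviation "N \<equiv> relN A Rels"
abbreviation "L \<equiv> flift H f"

lemma gh: "group_hom FG H L"
  by (intro group_hom.intro group_hom_axioms.intro group_free_grp H group.flift_hom[OF H fc])

lemma N_kernel: "N \<subseteq> kernel FG H L"
proof -
  interpret gh: group_hom FG H L by (rule gh)
  let ?S = "{g \<otimes>\<^bsub>FG\<^esub> r \<otimes>\<^bsub>FG\<^esub> inv\<^bsub>FG\<^esub> g | g r. g \<in> carrier FG \<and> r \<in> {reduce (u @ inv_word v) | u v. (u, v) \<in> Rels}}"
  have "?S \<subseteq> kernel FG H L"
  proof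
    fix x assume "x \<in> ?S"
    then obtain g u v where g: "g \<in> carrier FG" and uv: "(u, v) \<in> Rels"
      and x: "x = g \<otimes>\<^bsub>FG\<^esub> reduce (u @ inv_word v) \<otimes>\<^bsub>FG\<^esub> inv\<^bsub>FG\<^esub> g" by blast
    have r: "reduce (u @ inv_word v) \<in> carrier FG"
    proof (rule reduce_in_carrier)
      show "snd ` set (u @ inv_word v) \<subseteq> A" using relsA[OF uv] set_inv_word[of v] by (simp add: image_Un)
    qed
    have "L (reduce (u @ inv_word v)) = \<one>\<^bsub>H\<^esub>"
      using rels[OF uv] group.flift_reduce[OF H fc] group.flift_append[OF H fc]
        group.flift_inv_word[OF H fc] group.flift_carrier[OF H fc]
      by (simp add: group.r_inv[OF H])
    then show "x \<in> kernel FG H L" using g r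
      by (simp add: x kernel_def gh.hom_mult gh.hom_inv)
  qed
  then show ?thesis
    unfolding relN_def normal_closure_def
    by (rule group.generate_subgroup_incl[OF group_free_grp]) (rule gh.subgroup_kernel)
qed

lemma one_N: "[] \<in> N"
  unfolding relN_def normal_closure_def using generate.one[of FG] by (simp add: free_grp_one)



lemma image_coset: assumes a: "a \<in> carrier FG" shows "L ` (N #>\<^bsub>FG\<^esub> a) = {L a}"
proof -
  interpret gh: group_hom FG H L by (rule gh)
  have "L (h \<otimes>\<^bsub>FG\<^esub> a) = L a" if "h \<in> N" for h
    using N_kernel that a by (auto simp: kernel_def gh.hom_mult)
  moreover have "a \<in> N #>\<^bsub>FG\<^esub> a" by (rule self_coset[OF a one_N])
  ultimately show ?thesis by (auto simp: r_coset_def)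
qed

lemma theta_coset: "a \<in> carrier FG \<Longrightarrow> theta H f (N #>\<^bsub>FG\<^esub> a) = L a"
  by (simp add: theta_def image_coset)

lemma theta_hom: "theta H f \<in> hom (FG Mod N) H"
proof -
  interpret gh: group_hom FG H L by (rule gh)
  have "theta H f XX \<in> carrier H" if "XX \<in> carrier (FG Mod N)" for XX
    using that by (auto simp: carrier_FactGroup theta_coset)
  moreover have "theta H f (XX <#>\<^bsub>FG\<^esub> YY) = theta H f XX \<otimes>\<^bsub>H\<^esub> theta H f YY"
    if XXc: "XX \<in> carrier (FG Mod N)" and YYc: "YY \<in> carrier (FG Mod N)" for XX YY
  proof -
    obtain a where a: "a \<in> carrier FG" "XX = N #>\<^bsub>FG\<^esub> a"
      using XXc unfolding carrier_FactGroup by blast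
    obtain b where b: "b \<in> carrier FG" "YY = N #>\<^bsub>FG\<^esub> b"
      using YYc unfolding carrier_FactGroup by blast
    have "L ` (XX <#>\<^bsub>FG\<^esub> YY) = {L a \<otimes>\<^bsub>H\<^esub> L b}"
    proof -
      have "L (x \<otimes>\<^bsub>FG\<^esub> y) = L a \<otimes>\<^bsub>H\<^esub> L b" if "x \<in> XX" "y \<in> YY" for x y
      proof -
        have Nc: "N \<subseteq> carrier FG" using N_kernel by (auto simp: kernel_def)
        have cc: "c \<in> carrier FG" if cN: "c \<in> N #>\<^bsub>FG\<^esub> d" and dc: "d \<in> carrier FG" for c d
        proof -
          obtain h where "h \<in> N" "c = h \<otimes>\<^bsub>FG\<^esub> d" using cN unfolding r_coset_def by blast
          then show ?thesis using Nc dc group.subgroup_self[OF group_free_grp] subgroup.m_closed by blast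
        qed
        have xc: "x \<in> carrier FG" "y \<in> carrier FG"
          using cc[OF _ a(1)] cc[OF _ b(1)] that a(2) b(2) by simp_all
        have "L x \<in> L ` XX" "L y \<in> L ` YY" using that by simp_all
        then have "L x = L a" "L y = L b" using image_coset[OF a(1)] image_coset[OF b(1)] a(2) b(2) by simp_all
        then show ?thesis using xc by (simp add: gh.hom_mult)
      qed
      then have all: "\<forall>z\<in>XX <#>\<^bsub>FG\<^esub> YY. L z = L a \<otimes>\<^bsub>H\<^esub> L b"
        unfolding set_mult_def by auto
      have "a \<in> XX" "b \<in> YY" using self_coset[OF a(1) one_N] self_coset[OF b(1) one_N] a(2) b(2) by simp_all
      then have mem: "a \<otimes>\<^bsub>FG\<^esub> b \<in> XX <#>\<^bsub>FG\<^esub> YY" unfolding set_mult_def by auto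
      show ?thesis
      proof
        show "L ` (XX <#>\<^bsub>FG\<^esub> YY) \<subseteq> {L a \<otimes>\<^bsub>H\<^esub> L b}" using all by auto
        show "{L a \<otimes>\<^bsub>H\<^esub> L b} \<subseteq> L ` (XX <#>\<^bsub>FG\<^esub> YY)" using all mem by (metis empty_subsetI image_eqI insert_subset)
      qed
    qed
    then show ?thesis using a b by (simp add: theta_def image_coset)
  qed
  ultimately show ?thesis by (auto simp: hom_def)
qed

lemma theta_pclass: "snd ` set w \<subseteq> A \<Longrightarrow> theta H f (pclass A Rels w) = L w"
  by (simp add: pclass_eq theta_coset reduce_in_carrier group.flift_reduce[OF H fc])

end




abbreviation "CC n \<equiv> carrier (F2n n)"

lemma F2n_carrier: "CC n = {w. reduced w \<and> snd ` set w \<subseteq> F2n_gens n}"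
  by (simp add: F2n_def free_grp_carrier)

lemma group_F2n: "group (F2n n)" by (simp add: F2n_def group_free_grp)

lemma in_gens[simp]: "Xg k \<in> F2n_gens n \<longleftrightarrow> 1 \<le> k \<and> k \<le> n" "Yg k \<in> F2n_gens n \<longleftrightarrow> 1 \<le> k \<and> k \<le> n"
  by (auto simp: F2n_gens_def)

lemma fs_simps[simp]: "fs f (False, a) = f a" "fs f (True, a) = inv_word (f a)"
  by (simp_all add: fs_def)

lemma free_ext_Nil[simp]: "free_ext f [] = []" by (simp add: free_ext_def reduce_def)

lemma free_ext_Cons: "free_ext f (l # w) = reduce (fs f l @ free_ext f w)"
  by (simp add: free_ext_fs reduce_absorb2)

lemma reduce_simps[simp]: "reduce [] = []" "reduce (l # w) = red_cons l (reduce w)"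
  by (simp_all add: reduce_def)

lemma inv_word_simps[simp]: "inv_word [] = []" "inv_word (l # w) = inv_word w @ [(\<not> fst l, snd l)]"
  by (simp_all add: inv_word_Cons ninv_def)

lemma gen_carrier: "a \<in> F2n_gens n \<Longrightarrow> gen a \<in> CC n"
  by (simp add: F2n_carrier gen_def)

lemma s_img_carrier: "1 \<le> i \<Longrightarrow> i + 1 \<le> n \<Longrightarrow> a \<in> F2n_gens n \<Longrightarrow> s_img i a \<in> CC n"
  by (auto simp: F2n_carrier s_img_def gen_def F2n_gens_def)

lemma r_img_carrier: "1 \<le> i \<Longrightarrow> i + 1 \<le> n \<Longrightarrow> a \<in> F2n_gens n \<Longrightarrow> r_img i a \<in> CC n"
  by (auto simp: F2n_carrier r_img_def gen_def F2n_gens_def)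

lemma s_hom: "1 \<le> i \<Longrightarrow> i + 1 \<le> n \<Longrightarrow> s_aut n i \<in> hom (F2n n) (F2n n)"
  unfolding s_aut_def F2n_def by (rule free_ext_hom) (use s_img_carrier in \<open>auto simp: F2n_def\<close>)

lemma r_hom: "1 \<le> i \<Longrightarrow> i + 1 \<le> n \<Longrightarrow> r_aut n i \<in> hom (F2n n) (F2n n)"
  unfolding r_aut_def F2n_def by (rule free_ext_hom) (use r_img_carrier in \<open>auto simp: F2n_def\<close>)

lemma s_apply: "w \<in> CC n \<Longrightarrow> s_aut n i w = free_ext (s_img i) w" by (simp add: s_aut_def)
lemma r_apply: "w \<in> CC n \<Longrightarrow> r_aut n i w = free_ext (r_img i) w" by (simp add: r_aut_def)

lemma s_closed: "1 \<le> i \<Longrightarrow> i + 1 \<le> n \<Longrightarrow> w \<in> CC n \<Longrightarrow> free_ext (s_img i) w \<in> CC n"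
  using s_hom[of i n] by (metis hom_in_carrier s_apply)
lemma r_closed: "1 \<le> i \<Longrightarrow> i + 1 \<le> n \<Longrightarrow> w \<in> CC n \<Longrightarrow> free_ext (r_img i) w \<in> CC n"
  using r_hom[of i n] by (metis hom_in_carrier r_apply)

lemma gen_cases: "a \<in> F2n_gens n \<Longrightarrow> (\<And>k. a = Xg k \<Longrightarrow> 1 \<le> k \<Longrightarrow> k \<le> n \<Longrightarrow> P) \<Longrightarrow> (\<And>k. a = Yg k \<Longrightarrow> 1 \<le> k \<Longrightarrow> k \<le> n \<Longrightarrow> P) \<Longrightarrow> P"
  by (auto simp: F2n_gens_def)

lemma unique_F2n:
  assumes "h1 \<in> hom (F2n n) (F2n n)" "h2 \<in> hom (F2n n) (F2n n)"
    "\<And>k. 1 \<le> k \<Longrightarrow> k \<le> n \<Longrightarrow> h1 (gen (Xg k)) = h2 (gen (Xg k))"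
    "\<And>k. 1 \<le> k \<Longrightarrow> k \<le> n \<Longrightarrow> h1 (gen (Yg k)) = h2 (gen (Yg k))"
  shows "\<forall>w \<in> CC n. h1 w = h2 w"
proof
  fix w assume w: "w \<in> CC n"
  have G: "group (free_grp (F2n_gens n))" by (rule group_free_grp)
  have "\<forall>a\<in>F2n_gens n. h1 (gen a) = h2 (gen a)"
    using assms(3,4) by (auto simp: F2n_gens_def)
  then show "h1 w = h2 w"
    using hom_unique[OF G assms(1,2)[unfolded F2n_def]] w by (simp add: F2n_def)
qed

lemma auto_I:
  assumes "f \<in> hom (F2n n) (F2n n)" "f \<in> extensional (CC n)" "\<forall>w\<in>CC n. f (f w) = w"
  shows "f \<in> auto (F2n n)"
proof -
  have "bij_betw f (CC n) (CC n)"
    by (rule bij_betwI[where g = f]) (use assms hom_in_carrier in \<open>auto simp: Pi_iff\<close>)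
  then show ?thesis using assms by (simp add: auto_def Bij_def)
qed

lemma s_invol: assumes "1 \<le> i" "i + 1 \<le> n" shows "\<forall>w\<in>CC n. s_aut n i (s_aut n i w) = w"
proof -
  have "\<forall>w\<in>CC n. (s_aut n i \<circ> s_aut n i) w = (\<lambda>w\<in>CC n. w) w"
  proof (rule unique_F2n)
    show "s_aut n i \<circ> s_aut n i \<in> hom (F2n n) (F2n n)" using s_hom[OF assms] hom_compose by blast
    show "(\<lambda>w\<in>CC n. w) \<in> hom (F2n n) (F2n n)" using group.id_in_auto[OF group_F2n] by (simp add: auto_def)
  qed (use assms in \<open>auto simp: s_apply s_closed gen_carrier\<close>,
       (auto simp: free_ext_Cons s_img_def gen_def))
  then show ?thesis by simp
qed




lemma hc: "f \<in> hom (F2n n) (F2n n) \<Longrightarrow> g \<in> hom (F2n n) (F2n n) \<Longrightarrow> g \<circ> f \<in> hom (F2n n) (F2n n)"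
  by (rule hom_compose)

lemma id_hom: "(\<lambda>w\<in>CC n. w) \<in> hom (F2n n) (F2n n)"
  using group.id_in_auto[OF group_F2n] by (simp add: auto_def)

lemma rel_ss_far: assumes "1 \<le> i" "i + 1 \<le> n" "1 \<le> j" "j + 1 \<le> n" "i + 2 \<le> j \<or> j + 2 \<le> i"
  shows "\<forall>w\<in>CC n. (s_aut n j \<circ> s_aut n i) w = (s_aut n i \<circ> s_aut n j) w"
  by (rule unique_F2n; (intro hc s_hom r_hom id_hom; use assms in arith)?;
        use assms in \<open>simp add: s_apply s_closed r_apply r_closed gen_carrier\<close>;
        use assms in \<open>auto simp: free_ext_Cons s_img_def r_img_def gen_def\<close>)

lemma rel_sss: assumes "1 \<le> i" "i + 2 \<le> n"
  shows "\<forall>w\<in>CC n. (s_aut n i \<circ> s_aut n (i+1) \<circ> s_aut n i) w = (s_aut n (i+1) \<circ> s_aut n i \<circ> s_aut n (i+1)) w"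
  by (rule unique_F2n; (intro hc s_hom r_hom id_hom; use assms in arith)?;
        use assms in \<open>simp add: s_apply s_closed r_apply r_closed gen_carrier\<close>;
        use assms in \<open>auto simp: free_ext_Cons s_img_def r_img_def gen_def\<close>)

lemma rel_rr: assumes "1 \<le> i" "i + 1 \<le> n"
  shows "\<forall>w\<in>CC n. (r_aut n i \<circ> r_aut n i) w = (\<lambda>w\<in>CC n. w) w"
  by (rule unique_F2n; (intro hc s_hom r_hom id_hom; use assms in arith)?;
        use assms in \<open>simp add: s_apply s_closed r_apply r_closed gen_carrier\<close>;
        use assms in \<open>auto simp: free_ext_Cons s_img_def r_img_def gen_def\<close>)

lemma rel_rr_far: assumes "1 \<le> i" "i + 1 \<le> n" "1 \<le> j" "j + 1 \<le> n" "i + 2 \<le> j \<or> j + 2 \<le> i"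
  shows "\<forall>w\<in>CC n. (r_aut n j \<circ> r_aut n i) w = (r_aut n i \<circ> r_aut n j) w"
  by (rule unique_F2n; (intro hc s_hom r_hom id_hom; use assms in arith)?;
        use assms in \<open>simp add: s_apply s_closed r_apply r_closed gen_carrier\<close>;
        use assms in \<open>auto simp: free_ext_Cons s_img_def r_img_def gen_def\<close>)

lemma rel_rrr: assumes "1 \<le> i" "i + 2 \<le> n"
  shows "\<forall>w\<in>CC n. (r_aut n i \<circ> r_aut n (i+1) \<circ> r_aut n i) w = (r_aut n (i+1) \<circ> r_aut n i \<circ> r_aut n (i+1)) w"
  by (rule unique_F2n; (intro hc s_hom r_hom id_hom; use assms in arith)?;
        use assms in \<open>simp add: s_apply s_closed r_apply r_closed gen_carrier\<close>;
        use assms in \<open>auto simp: free_ext_Cons s_img_def r_img_def gen_def\<close>)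

lemma rel_sr_far: assumes "1 \<le> i" "i + 1 \<le> n" "1 \<le> j" "j + 1 \<le> n" "i + 2 \<le> j \<or> j + 2 \<le> i"
  shows "\<forall>w\<in>CC n. (r_aut n j \<circ> s_aut n i) w = (s_aut n i \<circ> r_aut n j) w"
  by (rule unique_F2n; (intro hc s_hom r_hom id_hom; use assms in arith)?;
        use assms in \<open>simp add: s_apply s_closed r_apply r_closed gen_carrier\<close>;
        use assms in \<open>auto simp: free_ext_Cons s_img_def r_img_def gen_def\<close>)

lemma rel_rrs: assumes "1 \<le> i" "i + 2 \<le> n"
  shows "\<forall>w\<in>CC n. (s_aut n i \<circ> r_aut n (i+1) \<circ> r_aut n i) w = (r_aut n (i+1) \<circ> r_aut n i \<circ> s_aut n (i+1)) w"
  by (rule unique_F2n; (intro hc s_hom r_hom id_hom; use assms in arith)?;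
        use assms in \<open>simp add: s_apply s_closed r_apply r_closed gen_carrier\<close>;
        use assms in \<open>auto simp: free_ext_Cons s_img_def r_img_def gen_def\<close>)




lemma s_auto: assumes "1 \<le> i" "i + 1 \<le> n" shows "s_aut n i \<in> auto (F2n n)"
  using s_invol[OF assms] by (intro auto_I s_hom assms) (auto simp: s_aut_def)

lemma r_auto: assumes "1 \<le> i" "i + 1 \<le> n" shows "r_aut n i \<in> auto (F2n n)"
  using rel_rr[OF assms] by (intro auto_I r_hom assms) (auto simp: r_aut_def)

definition fv :: "nat \<Rightarrow> bgen \<Rightarrow> fgen word \<Rightarrow> fgen word" where
  "fv n b = (case b of Sig i \<Rightarrow> if 1 \<le> i \<and> i + 1 \<le> n then s_aut n i else (\<lambda>w\<in>CC n. w)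
                     | Rho i \<Rightarrow> if 1 \<le> i \<and> i + 1 \<le> n then r_aut n i else (\<lambda>w\<in>CC n. w))"

lemma fv_auto: "fv n b \<in> auto (F2n n)"
  using group.id_in_auto[OF group_F2n] s_auto r_auto by (auto simp: fv_def split: bgen.splits)

lemma fv_Sig: "1 \<le> i \<Longrightarrow> i + 1 \<le> n \<Longrightarrow> fv n (Sig i) = s_aut n i" by (simp add: fv_def)
lemma fv_Rho: "1 \<le> i \<Longrightarrow> i + 1 \<le> n \<Longrightarrow> fv n (Rho i) = r_aut n i" by (simp add: fv_def)

abbreviation "HH n \<equiv> AutR (F2n n)"

lemma group_HH: "group (HH n)" by (rule group_AutR[OF group_F2n])

lemma fv_carrier: "\<forall>a. fv n a \<in> carrier (HH n)" using fv_auto by (simp add: AutR_carrier)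

lemma auto_closed: "f \<in> auto G \<Longrightarrow> x \<in> carrier G \<Longrightarrow> f x \<in> carrier G"
  by (auto simp: auto_def hom_def)

lemma flift_apply:
  assumes "\<forall>l\<in>set w. fst l = False" "x \<in> CC n"
  shows "flift (HH n) (fv n) w x = fold (\<lambda>l y. fv n (snd l) y) w x"
  using assms
proof (induction w arbitrary: x)
  case Nil then show ?case by (simp add: AutR_one flift_def)
next
  case (Cons l w)
  have fl: "fv n (snd l) \<in> auto (F2n n)" by (rule fv_auto)
  have lw: "flift (HH n) (fv n) w \<in> auto (F2n n)"
    using group.flift_carrier[OF group_HH fv_carrier] by (simp add: AutR_carrier)
  have "flift (HH n) (fv n) (l # w) = fv n (snd l) \<otimes>\<^bsub>HH n\<^esub> flift (HH n) (fv n) w"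
    using Cons.prems by (simp add: group.flift_Cons[OF group_HH] lt_def)
  then have "flift (HH n) (fv n) (l # w) x = flift (HH n) (fv n) w (fv n (snd l) x)"
    using Cons.prems by (simp add: AutR_mult compose_def)
  also have "\<dots> = fold (\<lambda>l y. fv n (snd l) y) w (fv n (snd l) x)"
    using Cons auto_closed[OF fl] by simp
  finally show ?case by simp
qed

lemma auto_ext: "f \<in> auto G \<Longrightarrow> g \<in> auto G \<Longrightarrow> (\<And>x. x \<in> carrier G \<Longrightarrow> f x = g x) \<Longrightarrow> f = g"
  by (rule extensionalityI[where A = "carrier G"]) (auto simp: auto_def Bij_def)

lemma flift_eqI:
  assumes "\<forall>l\<in>set u. fst l = False" "\<forall>l\<in>set v. fst l = False"
    "\<And>x. x \<in> CC n \<Longrightarrow> fold (\<lambda>l y. fv n (snd l) y) u x = fold (\<lambda>l y. fv n (snd l) y) v x"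
  shows "flift (HH n) (fv n) u = flift (HH n) (fv n) v"
  using group.flift_carrier[OF group_HH fv_carrier]
  by (intro auto_ext[where G = "F2n n"]) (auto simp: AutR_carrier flift_apply assms)

lemma R1: assumes "1 \<le> i" "i \<le> n - 1" "1 \<le> j" "j \<le> n - 1" "i + 2 \<le> j \<or> j + 2 \<le> i"
  shows "flift (HH n) (fv n) (sg i @ sg j) = flift (HH n) (fv n) (sg j @ sg i)"
  by (rule flift_eqI) (use rel_ss_far[of i n j] assms in \<open>auto simp: fv_Sig fv_Rho\<close>)

lemma R2: assumes "1 \<le> i" "i + 1 \<le> n - 1"
  shows "flift (HH n) (fv n) (sg i @ sg (i+1) @ sg i) = flift (HH n) (fv n) (sg (i+1) @ sg i @ sg (i+1))"
  by (rule flift_eqI) (use rel_sss[of i n] assms in \<open>auto simp: fv_Sig fv_Rho\<close>)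

lemma R3: assumes "1 \<le> i" "i \<le> n - 1"
  shows "flift (HH n) (fv n) (rh i @ rh i) = flift (HH n) (fv n) ([])"
  by (rule flift_eqI) (use rel_rr[of i n] assms in \<open>auto simp: fv_Sig fv_Rho\<close>)

lemma R4: assumes "1 \<le> i" "i \<le> n - 1" "1 \<le> j" "j \<le> n - 1" "i + 2 \<le> j \<or> j + 2 \<le> i"
  shows "flift (HH n) (fv n) (rh i @ rh j) = flift (HH n) (fv n) (rh j @ rh i)"
  by (rule flift_eqI) (use rel_rr_far[of i n j] assms in \<open>auto simp: fv_Sig fv_Rho\<close>)

lemma R5: assumes "1 \<le> i" "i + 1 \<le> n - 1"
  shows "flift (HH n) (fv n) (rh i @ rh (i+1) @ rh i) = flift (HH n) (fv n) (rh (i+1) @ rh i @ rh (i+1))"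
  by (rule flift_eqI) (use rel_rrr[of i n] assms in \<open>auto simp: fv_Sig fv_Rho\<close>)

lemma R6: assumes "1 \<le> i" "i \<le> n - 1" "1 \<le> j" "j \<le> n - 1" "i + 2 \<le> j \<or> j + 2 \<le> i"
  shows "flift (HH n) (fv n) (sg i @ rh j) = flift (HH n) (fv n) (rh j @ sg i)"
  by (rule flift_eqI) (use rel_sr_far[of i n j] assms in \<open>auto simp: fv_Sig fv_Rho\<close>)

lemma R7: assumes "1 \<le> i" "i + 1 \<le> n - 1"
  shows "flift (HH n) (fv n) (rh i @ rh (i+1) @ sg i) = flift (HH n) (fv n) (sg (i+1) @ rh i @ rh (i+1))"
  by (rule flift_eqI) (use rel_rrs[of i n] assms in \<open>auto simp: fv_Sig fv_Rho\<close>)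

lemma R8: assumes "1 \<le> i" "i \<le> n - 1"
  shows "flift (HH n) (fv n) (sg i @ sg i) = flift (HH n) (fv n) ([])"
  by (rule flift_eqI) (use s_invol[of i n] assms in \<open>auto simp: fv_Sig fv_Rho\<close>)

lemma rels_hold: assumes "(u, v) \<in> fvb_rels n"
  shows "flift (HH n) (fv n) u = flift (HH n) (fv n) v"
  using assms unfolding fvb_rels_def
  apply (elim UnE CollectE exE conjE)
  apply (simp_all only: prod.inject)
  subgoal by (rule R1)
  subgoal by (rule R2)
  subgoal by (rule R3)
  subgoal by (rule R4)
  subgoal by (rule R5)
  subgoal by (rule R6)
  subgoal by (rule R7)
  subgoal by (rule R8)
  done




lemma forb: assumes "1 \<le> i" "i + 2 \<le> n"
  shows "s_aut n i (s_aut n (i+1) (r_aut n i (gen (Xg (i+2)))))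
       \<noteq> r_aut n (i+1) (s_aut n i (s_aut n (i+1) (gen (Xg (i+2)))))"
  using assms
  apply (simp add: s_apply s_closed r_apply r_closed gen_carrier)
  apply (simp add: free_ext_Cons s_img_def r_img_def gen_def)
  done

lemma fvb_gens_mem[simp]: "Sig i \<in> fvb_gens n \<longleftrightarrow> 1 \<le> i \<and> i \<le> n - 1" "Rho i \<in> fvb_gens n \<longleftrightarrow> 1 \<le> i \<and> i \<le> n - 1"
  by (auto simp: fvb_gens_def)

lemma relsA: "(u, v) \<in> fvb_rels n \<Longrightarrow> snd ` set u \<subseteq> fvb_gens n \<and> snd ` set v \<subseteq> fvb_gens n"
  unfolding fvb_rels_def by auto

lemma flift_single: "flift (HH n) (fv n) [(False, a)] = fv n a"
  using group.flift_Cons[OF group_HH[of n], of "fv n" "(False, a)" "[]"] fv_carrier[of n]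
    monoid.r_one[OF group.is_monoid[OF group_HH]] by (simp add: lt_def flift_def)

theorem theorem1:
  fixes n :: nat
  assumes "n \<ge> 2"
  shows "\<exists>\<theta>. \<theta> \<in> hom (FVB n) (AutR (F2n n))
           \<and> (\<forall>i. 1 \<le> i \<and> i \<le> n - 1 \<longrightarrow>
                  \<theta> (fvb_elt n (sg i)) = s_aut n i \<and> \<theta> (fvb_elt n (rh i)) = r_aut n i)
           \<and> (\<forall>i. 1 \<le> i \<and> i \<le> n - 2 \<longrightarrow>
                  \<theta> (fvb_elt n (rh i @ sg (i+1) @ sg i))
                  \<noteq> \<theta> (fvb_elt n (sg (i+1) @ sg i @ rh (i+1))))"
proof -
  interpret fs: fact_setup "HH n" "fv n" "fvb_gens n" "fvb_rels n"
    by (rule fact_setup.intro) (auto simp: group_HH fv_carrier rels_hold relsA)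
  let ?t = "theta (HH n) (fv n)"
  have el: "?t (fvb_elt n w) = flift (HH n) (fv n) w" if "snd ` set w \<subseteq> fvb_gens n" for w
    using fs.theta_pclass[OF that] by (simp add: fvb_elt_def)
  show ?thesis
  proof (intro exI conjI allI impI)
    show "?t \<in> hom (FVB n) (AutR (F2n n))"
      using fs.theta_hom by (simp add: FVB_def presented_grp_eq)
  next
    fix i assume i: "1 \<le> i \<and> i \<le> n - 1"
    have i1: "1 \<le> i" "i + 1 \<le> n" using i by arith+
    then show "?t (fvb_elt n (sg i)) = s_aut n i" "?t (fvb_elt n (rh i)) = r_aut n i"
      using i by (simp_all add: el flift_single fv_Sig fv_Rho)
  next
    fix i assume i: "1 \<le> i \<and> i \<le> n - 2"
    let ?u = "rh i @ sg (i+1) @ sg i" and ?v = "sg (i+1) @ sg i @ rh (i+1)"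
    have gi: "snd ` set ?u \<subseteq> fvb_gens n" "snd ` set ?v \<subseteq> fvb_gens n"
      using i assms by (auto simp: fvb_gens_def)
    have i2: "i + 2 \<le> n" using i assms by arith
    have x: "gen (Xg (i+2)) \<in> CC n" using i i2 by (intro gen_carrier) simp
    show "?t (fvb_elt n ?u) \<noteq> ?t (fvb_elt n ?v)"
    proof
      assume "?t (fvb_elt n ?u) = ?t (fvb_elt n ?v)"
      then have "flift (HH n) (fv n) ?u = flift (HH n) (fv n) ?v"
        using el[OF gi(1)] el[OF gi(2)] by metis
      then have "flift (HH n) (fv n) ?u (gen (Xg (i+2))) = flift (HH n) (fv n) ?v (gen (Xg (i+2)))"
        by (rule fun_cong)
      moreover have "flift (HH n) (fv n) ?u (gen (Xg (i+2))) = fold (\<lambda>l y. fv n (snd l) y) ?u (gen (Xg (i+2)))"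
        by (rule flift_apply[OF _ x]) simp
      moreover have "flift (HH n) (fv n) ?v (gen (Xg (i+2))) = fold (\<lambda>l y. fv n (snd l) y) ?v (gen (Xg (i+2)))"
        by (rule flift_apply[OF _ x]) simp
      ultimately show False using forb[of i n] i i2
        by (simp add: fv_Sig fv_Rho)
    qed
  qed
qed


end
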